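(* Let $(\mathcal A_1,U,\varphi_1),\dots,(\mathcal A_m,U,\varphi_m)$ be symmetric qualitative formalisms over the same set $U$, and let $\mathfrak R'\subseteq U\times U$ be symmetric ($\mathfrak R'=\mathfrak R'^{-1}$). For each distinct $i,j\in\{1,\dots,m\}$ let $\Rsh_i^j$ be a projection operator from $\mathcal A_i$ to $\mathcal A_j$ such that $\varphi_i(b)\cap\varphi_j(\mathcal B_j)\cap\mathfrak R'\subseteq\varphi_j(\Rsh_i^jb)$ for every atom $b$ of $\mathcal A_i$. Let $\mathcal A$ be the multi-algebra $\mathcal A_1\times\cdots\times\mathcal A_m$ equipped with the projections $\Rsh_i^j$, and let $\varphi:\mathcal A\to2^{U\times U}$ be defined by $\varphi(R)=\bigcap_{i=1}^m\varphi_i(R_i)\cap\mathfrak R'$. Then $(\mathcal A,U,\varphi)$ is a sequential formalism.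
   Context: A finite non-associative algebra is a tuple $(\mathcal A,\cup,\neg,\emptyset,\mathcal B,\diamond,\overline{\cdot},e)$ where $(\mathcal A,\cup,\neg,\emptyset,\mathcal B)$ is a finite Boolean algebra (with $x\cap y=\neg(\neg x\cup\neg y)$) and for all $x,y,z$: $\overline{\overline x}=x$, $\overline{x\cup y}=\overline x\cup\overline y$, $\overline{x\diamond y}=\overline y\diamond\overline x$, $e\diamond x=x\diamond e=x$, $x\diamond(y\cup z)=(x\diamond y)\cup(x\diamond z)$, $(x\diamond y)\cap\overline z=\emptyset\iff(y\diamond z)\cap\overline x=\emptyset$. $\mathcal B$ is the universal relation; $r\subseteq r'$ means $r\cup r'=r'$; atoms are the basic relations. A symmetric qualitative formalism is a triple $(\mathcal A,U,\varphi)$ with $\mathcal A$ a finite non-associative algebra, $U\neq\emptyset$ and $\varphi:\mathcal A\to2^{U\times U}$ with $\varphi(\emptyset)=\emptyset$, $\varphi(\overline r)=\varphi(r)^{-1}$, $\varphi(r\cap r')=\varphi(r)\cap\varphi(r')$, $\varphi(r\cup r')=\varphi(r)\cup\varphi(r')$, $\varphi(r\diamond r')\supseteq(\varphi(r)\circ\varphi(r'))\cap\varphi(\mathcal B)$ ($\circ$ composition of binary relations, $^{-1}$ converse). A projection operator from $\mathcal A$ to $\mathcal A'$ is a map $\Rsh$ with $\Rsh(r\cup r')=\Rsh r\cup\Rsh r'$ and $\Rsh\overline r=\overline{\Rsh r}$. A finite multi-algebra is a product $\mathcal A_1\times\cdots\times\mathcal A_m$ of finite non-associative algebras with projection operators $\Rsh_i^j:\mathcal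 A_i\to\mathcal A_j$ for all distinct $i,j$. Relations $R=(R_1,\dots,R_m)$; $R$ basic if all $R_i$ are atoms; universal relation $\mathcal B=(\mathcal B_1,\dots,\mathcal B_m)$; $\diamond,\cap,\cup,\overline{\cdot}$ and $\subseteq$ componentwise; $B\in R$ means $B$ basic with $B\subseteq R$. The projection closure $\Rsh R$ is obtained by repeatedly replacing $R_j$ by $R_j\cap\Rsh_i^jR_i$ (distinct $i,j$) until a fixed point. A sequential formalism is $(\mathcal A,U,\varphi)$ with $\mathcal A$ a finite multi-algebra, $U\ne\emptyset$, $\varphi:\mathcal A\to 2^{U\times U}$ satisfying for all $R,R'$: $\varphi(\Rsh R)=\varphi(R)$, $\varphi(\overline R)=\varphi(R)^{-1}$, $\varphi((\emptyset,\dots,\emptyset))=\emptyset$, $\varphi(R\diamond R')\supseteq(\varphi(R)\circ\varphi(R'))\cap\varphi(\mathcal B)$, $\varphi(R\cap R')=\varphi(R)\cap\varphi(R')$, $\varphi(R)=\bigcup_{B\in R}\varphi(B)$. *)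

theory Defs
  imports Main
begin

text \<open>A non-associative algebra is given on a carrier set inside some type 'a.
  Fields: union, complement, empty relation, universal relation B, composition,
  converse, identity e.\<close>

record 'a naa =
  carrier :: "'a set"
  join :: "'a \<Rightarrow> 'a \<Rightarrow> 'a"
  neg :: "'a \<Rightarrow> 'a"
  zero :: 'a
  univ :: 'a
  comp :: "'a \<Rightarrow> 'a \<Rightarrow> 'a"
  conv :: "'a \<Rightarrow> 'a"
  ident :: 'a

definition meet :: "'a naa \<Rightarrow> 'a \<Rightarrow> 'a \<Rightarrow> 'a" where
  "meet A x y = neg A (join A (neg A x) (neg A y))"

definition leq :: "'a naa \<Rightarrow> 'a \<Rightarrow> 'a \<Rightarrow> bool" where
  "leq A x y \<longleftrightarrow> join A x y = y"

definition is_atom :: "'a naa \<Rightarrow> 'a \<Rightarrow> bool" where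
  "is_atom A b \<longleftrightarrow> b \<in> carrier A \<and> b \<noteq> zero A \<and>
     (\<forall>x\<in>carrier A. leq A x b \<longrightarrow> x = zero A \<or> x = b)"

definition finite_boolean_algebra :: "'a naa \<Rightarrow> bool" where
  "finite_boolean_algebra A \<longleftrightarrow>
     finite (carrier A) \<and> zero A \<in> carrier A \<and> univ A \<in> carrier A \<and>
     (\<forall>x\<in>carrier A. \<forall>y\<in>carrier A. join A x y \<in> carrier A) \<and>
     (\<forall>x\<in>carrier A. neg A x \<in> carrier A) \<and>
     (\<forall>x\<in>carrier A. \<forall>y\<in>carrier A. join A x y = join A y x) \<and>
     (\<forall>x\<in>carrier A. \<forall>y\<in>carrier A. meet A x y = meet A y x) \<and>
     (\<forall>x\<in>carrier A. \<forall>y\<in>carrier A. \<forall>z\<in>carrier A.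
        join A x (join A y z) = join A (join A x y) z) \<and>
     (\<forall>x\<in>carrier A. \<forall>y\<in>carrier A. \<forall>z\<in>carrier A.
        meet A x (meet A y z) = meet A (meet A x y) z) \<and>
     (\<forall>x\<in>carrier A. \<forall>y\<in>carrier A. join A x (meet A x y) = x) \<and>
     (\<forall>x\<in>carrier A. \<forall>y\<in>carrier A. meet A x (join A x y) = x) \<and>
     (\<forall>x\<in>carrier A. \<forall>y\<in>carrier A. \<forall>z\<in>carrier A.
        meet A x (join A y z) = join A (meet A x y) (meet A x z)) \<and>
     (\<forall>x\<in>carrier A. join A x (zero A) = x) \<and>
     (\<forall>x\<in>carrier A. meet A x (univ A) = x) \<and>
     (\<forall>x\<in>carrier A. join A x (neg A x) = univ A) \<and>
     (\<forall>x\<in>carrier A. meet A x (neg A x) = zero A)"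

definition finite_naa :: "'a naa \<Rightarrow> bool" where
  "finite_naa A \<longleftrightarrow> finite_boolean_algebra A \<and>
     ident A \<in> carrier A \<and>
     (\<forall>x\<in>carrier A. \<forall>y\<in>carrier A. comp A x y \<in> carrier A) \<and>
     (\<forall>x\<in>carrier A. conv A x \<in> carrier A) \<and>
     (\<forall>x\<in>carrier A. conv A (conv A x) = x) \<and>
     (\<forall>x\<in>carrier A. \<forall>y\<in>carrier A. conv A (join A x y) = join A (conv A x) (conv A y)) \<and>
     (\<forall>x\<in>carrier A. \<forall>y\<in>carrier A. conv A (comp A x y) = comp A (conv A y) (conv A x)) \<and>
     (\<forall>x\<in>carrier A. comp A (ident A) x = x \<and> comp A x (ident A) = x) \<and>
     (\<forall>x\<in>carrier A. \<forall>y\<in>carrier A. \<forall>z\<in>carrier A.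
        comp A x (join A y z) = join A (comp A x y) (comp A x z)) \<and>
     (\<forall>x\<in>carrier A. \<forall>y\<in>carrier A. \<forall>z\<in>carrier A.
        (meet A (comp A x y) (conv A z) = zero A) \<longleftrightarrow>
        (meet A (comp A y z) (conv A x) = zero A))"

definition sym_qual_formalism ::
    "'a naa \<Rightarrow> 'u set \<Rightarrow> ('a \<Rightarrow> ('u \<times> 'u) set) \<Rightarrow> bool" where
  "sym_qual_formalism A U \<phi> \<longleftrightarrow> finite_naa A \<and> U \<noteq> {} \<and>
     (\<forall>r\<in>carrier A. \<phi> r \<subseteq> U \<times> U) \<and>
     \<phi> (zero A) = {} \<and>
     (\<forall>r\<in>carrier A. \<phi> (conv A r) = (\<phi> r)\<inverse>) \<and>
     (\<forall>r\<in>carrier A. \<forall>r'\<in>carrier A. \<phi> (meet A r r') = \<phi> r \<inter> \<phi> r') \<and>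
     (\<forall>r\<in>carrier A. \<forall>r'\<in>carrier A. \<phi> (join A r r') = \<phi> r \<union> \<phi> r') \<and>
     (\<forall>r\<in>carrier A. \<forall>r'\<in>carrier A.
        (\<phi> r O \<phi> r') \<inter> \<phi> (univ A) \<subseteq> \<phi> (comp A r r'))"

definition projection_operator :: "'a naa \<Rightarrow> 'a naa \<Rightarrow> ('a \<Rightarrow> 'a) \<Rightarrow> bool" where
  "projection_operator A A' P \<longleftrightarrow>
     (\<forall>r\<in>carrier A. P r \<in> carrier A') \<and>
     (\<forall>r\<in>carrier A. \<forall>r'\<in>carrier A. P (join A r r') = join A' (P r) (P r')) \<and>
     (\<forall>r\<in>carrier A. P (conv A r) = conv A' (P r))"

text \<open>A multi-algebra A_0 x ... x A_(m-1) (indices shifted to 0..m-1) with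
  projections Proj i j from A_i to A_j. Relations are functions R with R i in
  carrier (Alg i) for i < m and R i = undefined otherwise (extensional tuples).\<close>

definition finite_multi_algebra ::
    "nat \<Rightarrow> (nat \<Rightarrow> 'a naa) \<Rightarrow> (nat \<Rightarrow> nat \<Rightarrow> 'a \<Rightarrow> 'a) \<Rightarrow> bool" where
  "finite_multi_algebra m Alg Proj \<longleftrightarrow>
     (\<forall>i<m. finite_naa (Alg i)) \<and>
     (\<forall>i<m. \<forall>j<m. i \<noteq> j \<longrightarrow> projection_operator (Alg i) (Alg j) (Proj i j))"

definition mrels :: "nat \<Rightarrow> (nat \<Rightarrow> 'a naa) \<Rightarrow> (nat \<Rightarrow> 'a) set" where
  "mrels m Alg = {R. (\<forall>i<m. R i \<in> carrier (Alg i)) \<and> (\<forall>i. m \<le> i \<longrightarrow> R i = undefined)}"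

definition mlift :: "nat \<Rightarrow> (nat \<Rightarrow> 'a) \<Rightarrow> nat \<Rightarrow> 'a" where
  "mlift m f = (\<lambda>i. if i < m then f i else undefined)"

definition mzero :: "nat \<Rightarrow> (nat \<Rightarrow> 'a naa) \<Rightarrow> nat \<Rightarrow> 'a" where
  "mzero m Alg = mlift m (\<lambda>i. zero (Alg i))"

definition muniv :: "nat \<Rightarrow> (nat \<Rightarrow> 'a naa) \<Rightarrow> nat \<Rightarrow> 'a" where
  "muniv m Alg = mlift m (\<lambda>i. univ (Alg i))"

definition mcomp :: "nat \<Rightarrow> (nat \<Rightarrow> 'a naa) \<Rightarrow> (nat \<Rightarrow> 'a) \<Rightarrow> (nat \<Rightarrow> 'a) \<Rightarrow> nat \<Rightarrow> 'a" where
  "mcomp m Alg R R' = mlift m (\<lambda>i. comp (Alg i) (R i) (R' i))"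

definition mmeet :: "nat \<Rightarrow> (nat \<Rightarrow> 'a naa) \<Rightarrow> (nat \<Rightarrow> 'a) \<Rightarrow> (nat \<Rightarrow> 'a) \<Rightarrow> nat \<Rightarrow> 'a" where
  "mmeet m Alg R R' = mlift m (\<lambda>i. meet (Alg i) (R i) (R' i))"

definition mconv :: "nat \<Rightarrow> (nat \<Rightarrow> 'a naa) \<Rightarrow> (nat \<Rightarrow> 'a) \<Rightarrow> nat \<Rightarrow> 'a" where
  "mconv m Alg R = mlift m (\<lambda>i. conv (Alg i) (R i))"

definition mleq :: "nat \<Rightarrow> (nat \<Rightarrow> 'a naa) \<Rightarrow> (nat \<Rightarrow> 'a) \<Rightarrow> (nat \<Rightarrow> 'a) \<Rightarrow> bool" where
  "mleq m Alg R R' \<longleftrightarrow> (\<forall>i<m. leq (Alg i) (R i) (R' i))"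

definition mbasic :: "nat \<Rightarrow> (nat \<Rightarrow> 'a naa) \<Rightarrow> (nat \<Rightarrow> 'a) \<Rightarrow> bool" where
  "mbasic m Alg B \<longleftrightarrow> B \<in> mrels m Alg \<and> (\<forall>i<m. is_atom (Alg i) (B i))"

definition basics_in :: "nat \<Rightarrow> (nat \<Rightarrow> 'a naa) \<Rightarrow> (nat \<Rightarrow> 'a) \<Rightarrow> (nat \<Rightarrow> 'a) set" where
  "basics_in m Alg R = {B. mbasic m Alg B \<and> mleq m Alg B R}"

definition proj_step ::
    "nat \<Rightarrow> (nat \<Rightarrow> 'a naa) \<Rightarrow> (nat \<Rightarrow> nat \<Rightarrow> 'a \<Rightarrow> 'a) \<Rightarrow> (nat \<Rightarrow> 'a) \<Rightarrow> (nat \<Rightarrow> 'a) \<Rightarrow> bool" where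
  "proj_step m Alg Proj R S \<longleftrightarrow> (\<exists>i<m. \<exists>j<m. i \<noteq> j \<and>
      S = R(j := meet (Alg j) (R j) (Proj i j (R i))))"

definition proj_fixed ::
    "nat \<Rightarrow> (nat \<Rightarrow> 'a naa) \<Rightarrow> (nat \<Rightarrow> nat \<Rightarrow> 'a \<Rightarrow> 'a) \<Rightarrow> (nat \<Rightarrow> 'a) \<Rightarrow> bool" where
  "proj_fixed m Alg Proj R \<longleftrightarrow> (\<forall>i<m. \<forall>j<m. i \<noteq> j \<longrightarrow>
      meet (Alg j) (R j) (Proj i j (R i)) = R j)"

definition is_proj_closure ::
    "nat \<Rightarrow> (nat \<Rightarrow> 'a naa) \<Rightarrow> (nat \<Rightarrow> nat \<Rightarrow> 'a \<Rightarrow> 'a) \<Rightarrow> (nat \<Rightarrow> 'a) \<Rightarrow> (nat \<Rightarrow> 'a) \<Rightarrow> bool" where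
  "is_proj_closure m Alg Proj R S \<longleftrightarrow>
     (proj_step m Alg Proj)\<^sup>*\<^sup>* R S \<and> proj_fixed m Alg Proj S"

definition sequential_formalism ::
    "nat \<Rightarrow> (nat \<Rightarrow> 'a naa) \<Rightarrow> (nat \<Rightarrow> nat \<Rightarrow> 'a \<Rightarrow> 'a) \<Rightarrow> 'u set \<Rightarrow>
     ((nat \<Rightarrow> 'a) \<Rightarrow> ('u \<times> 'u) set) \<Rightarrow> bool" where
  "sequential_formalism m Alg Proj U \<phi> \<longleftrightarrow>
     finite_multi_algebra m Alg Proj \<and> U \<noteq> {} \<and>
     (\<forall>R\<in>mrels m Alg. \<phi> R \<subseteq> U \<times> U) \<and>
     (\<forall>R\<in>mrels m Alg. \<forall>S. is_proj_closure m Alg Proj R S \<longrightarrow> \<phi> S = \<phi> R) \<and>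
     (\<forall>R\<in>mrels m Alg. \<phi> (mconv m Alg R) = (\<phi> R)\<inverse>) \<and>
     \<phi> (mzero m Alg) = {} \<and>
     (\<forall>R\<in>mrels m Alg. \<forall>R'\<in>mrels m Alg.
        (\<phi> R O \<phi> R') \<inter> \<phi> (muniv m Alg) \<subseteq> \<phi> (mcomp m Alg R R')) \<and>
     (\<forall>R\<in>mrels m Alg. \<forall>R'\<in>mrels m Alg.
        \<phi> (mmeet m Alg R R') = \<phi> R \<inter> \<phi> R') \<and>
     (\<forall>R\<in>mrels m Alg. \<phi> R = (\<Union>B\<in>basics_in m Alg R. \<phi> B))"

end

theory Submission
  imports Defs
begin

lemma fba_facts:
  assumes "finite_boolean_algebra A"
  shows "finite (carrier A)" "zero A \<in> carrier A" "univ A \<in> carrier A"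
    "\<And>x y. x\<in>carrier A \<Longrightarrow> y\<in>carrier A \<Longrightarrow> join A x y \<in> carrier A"
    "\<And>x. x\<in>carrier A \<Longrightarrow> neg A x \<in> carrier A"
    "\<And>x y. x\<in>carrier A \<Longrightarrow> y\<in>carrier A \<Longrightarrow> join A x y = join A y x"
    "\<And>x y. x\<in>carrier A \<Longrightarrow> y\<in>carrier A \<Longrightarrow> meet A x y = meet A y x"
    "\<And>x y z. x\<in>carrier A \<Longrightarrow> y\<in>carrier A \<Longrightarrow> z\<in>carrier A \<Longrightarrow>
        meet A x (meet A y z) = meet A (meet A x y) z"
    "\<And>x y. x\<in>carrier A \<Longrightarrow> y\<in>carrier A \<Longrightarrow> join A x (meet A x y) = x"
    "\<And>x y. x\<in>carrier A \<Longrightarrow> y\<in>carrier A \<Longrightarrow> meet A x (join A x y) = x"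
    "\<And>x. x\<in>carrier A \<Longrightarrow> meet A x (univ A) = x"
    "\<And>x. x\<in>carrier A \<Longrightarrow> join A x (neg A x) = univ A"
    "\<And>x. x\<in>carrier A \<Longrightarrow> meet A x (neg A x) = zero A"
  using assms unfolding finite_boolean_algebra_def by auto

lemma meet_closed:
  assumes "finite_boolean_algebra A" "x\<in>carrier A" "y\<in>carrier A"
  shows "meet A x y \<in> carrier A"
  using assms fba_facts(4,5) unfolding meet_def by metis

lemma meet_idem:
  assumes "finite_boolean_algebra A" "x\<in>carrier A"
  shows "meet A x x = x"
proof -
  have "join A x (meet A x x) = x" using fba_facts(9)[OF assms(1)] assms by blast
  hence "meet A x (join A x (meet A x x)) = meet A x x" by simp
  moreover have "meet A x (join A x (meet A x x)) = x"
    using fba_facts(10)[OF assms(1)] meet_closed[OF assms(1)] assms by blast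
  ultimately show ?thesis by simp
qed

lemma atom_cover:
  assumes F: "sym_qual_formalism A U \<Phi>" and x: "x \<in> carrier A" and p: "p \<in> \<Phi> x"
  shows "\<exists>b. is_atom A b \<and> leq A b x \<and> p \<in> \<Phi> b"
proof -
  have naa: "finite_naa A" using F unfolding sym_qual_formalism_def by blast
  hence fba: "finite_boolean_algebra A" unfolding finite_naa_def by blast
  note ff = fba_facts[OF fba]
  have Pz: "\<Phi> (zero A) = {}" using F unfolding sym_qual_formalism_def by blast
  have Pm: "\<And>r r'. r\<in>carrier A \<Longrightarrow> r'\<in>carrier A \<Longrightarrow> \<Phi> (meet A r r') = \<Phi> r \<inter> \<Phi> r'"
    using F unfolding sym_qual_formalism_def by blast
  have Pj: "\<And>r r'. r\<in>carrier A \<Longrightarrow> r'\<in>carrier A \<Longrightarrow> \<Phi> (join A r r') = \<Phi> r \<union> \<Phi> r'"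
    using F unfolding sym_qual_formalism_def by blast
  define S where "S = {z\<in>carrier A. p \<in> \<Phi> z}"
  have xS: "x \<in> S" using x p S_def by auto
  have finS: "finite S" using ff(1) S_def by auto
  have "\<And>G. finite G \<Longrightarrow> G \<subseteq> S \<Longrightarrow> \<exists>c\<in>S. \<forall>z\<in>G. meet A c z = c"
  proof -
    fix G :: "'a set"
    assume "finite G" "G \<subseteq> S"
    then show "\<exists>c\<in>S. \<forall>z\<in>G. meet A c z = c"
    proof (induction G rule: finite_induct)
      case empty
      then show ?case using xS by blast
    next
      case (insert z G)
      then obtain c where c: "c \<in> S" "\<forall>w\<in>G. meet A c w = c" by blast
      have zS: "z \<in> S" using insert by blast
      have cc: "c \<in> carrier A" "z \<in> carrier A" using c zS S_def by auto
      define c' where "c' = meet A c z"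
      have c'S: "c' \<in> S" using c zS cc Pm meet_closed[OF fba] unfolding S_def c'_def by auto
      have "\<forall>w\<in>insert z G. meet A c' w = c'"
      proof
        fix w assume w: "w \<in> insert z G"
        have wc: "w \<in> carrier A" using w insert.prems S_def by auto
        show "meet A c' w = c'"
        proof (cases "w = z")
          case True
          then show ?thesis unfolding c'_def using ff(8) cc meet_idem[OF fba] by metis
        next
          case False
          hence "w \<in> G" using w by blast
          hence "meet A c w = c" using c by blast
          then show ?thesis unfolding c'_def using ff(7,8) cc wc by metis
        qed
      qed
      then show ?case using c'S by blast
    qed
  qed
  from this[OF finS order.refl] obtain b where b: "b \<in> S" "\<forall>z\<in>S. meet A b z = b" by blast
  have bc: "b \<in> carrier A" and pb: "p \<in> \<Phi> b" using b S_def by auto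
  have "b \<noteq> zero A" using pb Pz by auto
  moreover have "\<forall>y\<in>carrier A. leq A y b \<longrightarrow> y = zero A \<or> y = b"
  proof (intro ballI impI)
    fix y assume yc: "y \<in> carrier A" and lyb: "leq A y b"
    have yeq: "y = meet A y b" using lyb ff(10)[OF yc bc] unfolding leq_def by simp
    show "y = zero A \<or> y = b"
    proof (cases "p \<in> \<Phi> y")
      case True
      hence "meet A b y = b" using b yc S_def by auto
      then show ?thesis using yeq ff(7)[OF yc bc] by simp
    next
      case False
      have "\<Phi> x = \<Phi> x \<inter> \<Phi> (univ A)" using Pm[OF x ff(3)] ff(11)[OF x] by simp
      hence "p \<in> \<Phi> (univ A)" using p by blast
      hence "p \<in> \<Phi> (neg A y)" using False Pj[OF yc ff(5)[OF yc]] ff(12)[OF yc] by auto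
      hence "meet A b (neg A y) = b" using b ff(5)[OF yc] S_def by auto
      hence "y = meet A y (meet A b (neg A y))" using yeq by simp
      also have "\<dots> = meet A (meet A y b) (neg A y)" using ff(8) yc bc ff(5)[OF yc] by blast
      also have "\<dots> = zero A" using yeq[symmetric] ff(13)[OF yc] by simp
      finally show ?thesis by blast
    qed
  qed
  ultimately have "is_atom A b" using bc unfolding is_atom_def by blast
  moreover have "leq A b x"
  proof -
    have "meet A b x = b" using b xS by blast
    hence "meet A x b = b" using ff(7)[OF x bc] by simp
    hence "join A x b = x" using ff(9)[OF x bc] by simp
    thus ?thesis unfolding leq_def using ff(6)[OF x bc] by simp
  qed
  ultimately show ?thesis using pb by blast
qed


lemma sqf_facts:
  assumes "sym_qual_formalism A U \<Phi>"
  shows "finite_naa A" "U \<noteq> {}"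
    "\<And>r. r\<in>carrier A \<Longrightarrow> \<Phi> r \<subseteq> U \<times> U"
    "\<Phi> (zero A) = {}"
    "\<And>r. r\<in>carrier A \<Longrightarrow> \<Phi> (conv A r) = (\<Phi> r)\<inverse>"
    "\<And>r r'. r\<in>carrier A \<Longrightarrow> r'\<in>carrier A \<Longrightarrow> \<Phi> (meet A r r') = \<Phi> r \<inter> \<Phi> r'"
    "\<And>r r'. r\<in>carrier A \<Longrightarrow> r'\<in>carrier A \<Longrightarrow> \<Phi> (join A r r') = \<Phi> r \<union> \<Phi> r'"
    "\<And>r r'. r\<in>carrier A \<Longrightarrow> r'\<in>carrier A \<Longrightarrow>
        (\<Phi> r O \<Phi> r') \<inter> \<Phi> (univ A) \<subseteq> \<Phi> (comp A r r')"
  using assms unfolding sym_qual_formalism_def by auto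

theorem mainTheorem3:
  fixes m :: nat
    and Alg :: "nat \<Rightarrow> 'a naa"
    and Proj :: "nat \<Rightarrow> nat \<Rightarrow> 'a \<Rightarrow> 'a"
    and U :: "'u set"
    and \<Phi> :: "nat \<Rightarrow> 'a \<Rightarrow> ('u \<times> 'u) set"
    and Rp :: "('u \<times> 'u) set"
  assumes m_pos: "1 \<le> m"
    and formalisms: "\<forall>i<m. sym_qual_formalism (Alg i) U (\<Phi> i)"
    and Rp_sym: "Rp = Rp\<inverse>"
    and proj_op: "\<forall>i<m. \<forall>j<m. i \<noteq> j \<longrightarrow> projection_operator (Alg i) (Alg j) (Proj i j)"
    and proj_sound: "\<forall>i<m. \<forall>j<m. i \<noteq> j \<longrightarrow> (\<forall>b. is_atom (Alg i) b \<longrightarrow>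
           \<Phi> i b \<inter> \<Phi> j (univ (Alg j)) \<inter> Rp \<subseteq> \<Phi> j (Proj i j b))"
  shows "sequential_formalism m Alg Proj U (\<lambda>R. (\<Inter>i\<in>{..<m}. \<Phi> i (R i)) \<inter> Rp)"
proof -
  define \<phi> where "\<phi> = (\<lambda>R. (\<Inter>i\<in>{..<m}. \<Phi> i (R i)) \<inter> Rp)"
  have m0: "0 < m" using m_pos by simp
  have F: "\<And>i. i < m \<Longrightarrow> sym_qual_formalism (Alg i) U (\<Phi> i)" using formalisms by blast
  have naa: "\<And>i. i < m \<Longrightarrow> finite_naa (Alg i)" using sqf_facts(1)[OF F] .
  have fba: "\<And>i. i < m \<Longrightarrow> finite_boolean_algebra (Alg i)" using naa unfolding finite_naa_def by blast
  note Psub = sqf_facts(3)[OF F]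
  note Pz = sqf_facts(4)[OF F]
  note Pc = sqf_facts(5)[OF F]
  note Pm = sqf_facts(6)[OF F]
  note Pj = sqf_facts(7)[OF F]
  note Pcomp = sqf_facts(8)[OF F]
  have univc: "\<And>i. i < m \<Longrightarrow> univ (Alg i) \<in> carrier (Alg i)" using fba_facts(3)[OF fba] by blast
  have Puniv: "\<And>i r. i < m \<Longrightarrow> r \<in> carrier (Alg i) \<Longrightarrow> \<Phi> i r \<subseteq> \<Phi> i (univ (Alg i))"
  proof -
    fix i r assume i: "i < m" and r: "r \<in> carrier (Alg i)"
    have "\<Phi> i r = \<Phi> i r \<inter> \<Phi> i (univ (Alg i))"
      using Pm[OF i r univc[OF i]] fba_facts(11)[OF fba[OF i] r] by simp
    thus "\<Phi> i r \<subseteq> \<Phi> i (univ (Alg i))" by blast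
  qed
  have Pmono: "\<And>i r r'. i < m \<Longrightarrow> r \<in> carrier (Alg i) \<Longrightarrow> r' \<in> carrier (Alg i) \<Longrightarrow>
      leq (Alg i) r r' \<Longrightarrow> \<Phi> i r \<subseteq> \<Phi> i r'"
  proof -
    fix i r r' assume i: "i < m" and r: "r \<in> carrier (Alg i)" and r': "r' \<in> carrier (Alg i)"
      and l: "leq (Alg i) r r'"
    have "\<Phi> i r' = \<Phi> i r \<union> \<Phi> i r'" using Pj[OF i r r'] l unfolding leq_def by simp
    thus "\<Phi> i r \<subseteq> \<Phi> i r'" by blast
  qed
  have mlift_app: "\<And>f i. i < m \<Longrightarrow> mlift m f i = f i" unfolding mlift_def by simp
  have s1: "finite_multi_algebra m Alg Proj"
    unfolding finite_multi_algebra_def using naa proj_op by blast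
  have s2: "U \<noteq> {}" using sqf_facts(2)[OF F[OF m0]] .
  have s3: "\<forall>R\<in>mrels m Alg. \<phi> R \<subseteq> U \<times> U"
  proof
    fix R assume "R \<in> mrels m Alg"
    hence "R 0 \<in> carrier (Alg 0)" using m0 unfolding mrels_def by blast
    hence "\<Phi> 0 (R 0) \<subseteq> U \<times> U" using Psub m0 by blast
    thus "\<phi> R \<subseteq> U \<times> U" unfolding \<phi>_def using m0 by blast
  qed
  have stepL: "\<And>R S. proj_step m Alg Proj R S \<Longrightarrow> R \<in> mrels m Alg \<Longrightarrow> S \<in> mrels m Alg \<and> \<phi> S = \<phi> R"
  proof -
    fix R S assume st: "proj_step m Alg Proj R S" and R: "R \<in> mrels m Alg"
    then obtain i j where ij: "i < m" "j < m" "i \<noteq> j"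
      and S: "S = R(j := meet (Alg j) (R j) (Proj i j (R i)))"
      unfolding proj_step_def by blast
    have Ri: "R i \<in> carrier (Alg i)" and Rj: "R j \<in> carrier (Alg j)" using R ij unfolding mrels_def by auto
    have po: "projection_operator (Alg i) (Alg j) (Proj i j)" using proj_op ij by blast
    have PRi: "Proj i j (R i) \<in> carrier (Alg j)" using po Ri unfolding projection_operator_def by blast
    have Sm: "S \<in> mrels m Alg" using R ij meet_closed[OF fba[OF ij(2)] Rj PRi] unfolding S mrels_def by auto
    have key: "\<phi> R \<subseteq> \<Phi> j (Proj i j (R i))"
    proof
      fix p assume p: "p \<in> \<phi> R"
      hence pi: "p \<in> \<Phi> i (R i)" and pj: "p \<in> \<Phi> j (R j)" and pR: "p \<in> Rp"
        using ij unfolding \<phi>_def by auto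
      obtain b where b: "is_atom (Alg i) b" "leq (Alg i) b (R i)" "p \<in> \<Phi> i b"
        using atom_cover[OF F[OF ij(1)] Ri pi] by blast
      have bc: "b \<in> carrier (Alg i)" using b unfolding is_atom_def by blast
      have "p \<in> \<Phi> j (univ (Alg j))" using Puniv[OF ij(2) Rj] pj by blast
      hence "p \<in> \<Phi> j (Proj i j b)" using proj_sound ij b pR by blast
      moreover have "leq (Alg j) (Proj i j b) (Proj i j (R i))"
        using po b(2) bc Ri unfolding projection_operator_def leq_def by metis
      moreover have "Proj i j b \<in> carrier (Alg j)" using po bc unfolding projection_operator_def by blast
      ultimately show "p \<in> \<Phi> j (Proj i j (R i))" using Pmono[OF ij(2) _ PRi] by blast
    qed
    have "\<phi> S = \<phi> R \<inter> \<Phi> j (Proj i j (R i))"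
    proof -
      have "\<phi> S = (\<Inter>k\<in>{..<m}. \<Phi> k (R k) \<inter> (if k = j then \<Phi> j (Proj i j (R i)) else UNIV)) \<inter> Rp"
        unfolding \<phi>_def S using Pm[OF ij(2) Rj PRi] by (intro arg_cong2[where f="(\<inter>)"] INF_cong) auto
      also have "\<dots> = \<phi> R \<inter> \<Phi> j (Proj i j (R i))" unfolding \<phi>_def using ij
        by (auto split: if_splits)
      finally show ?thesis .
    qed
    thus "S \<in> mrels m Alg \<and> \<phi> S = \<phi> R" using key Sm by blast
  qed
  have s4: "\<forall>R\<in>mrels m Alg. \<forall>S. is_proj_closure m Alg Proj R S \<longrightarrow> \<phi> S = \<phi> R"
  proof (intro ballI allI impI)
    fix R S assume R: "R \<in> mrels m Alg" and c: "is_proj_closure m Alg Proj R S"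
    hence rt: "(proj_step m Alg Proj)\<^sup>*\<^sup>* R S" unfolding is_proj_closure_def by blast
    have "S \<in> mrels m Alg \<and> \<phi> S = \<phi> R" using rt
    proof (induction rule: rtranclp_induct)
      case base then show ?case using R by simp
    next
      case (step y z) then show ?case using stepL by metis
    qed
    thus "\<phi> S = \<phi> R" by blast
  qed
  have s5: "\<forall>R\<in>mrels m Alg. \<phi> (mconv m Alg R) = (\<phi> R)\<inverse>"
  proof
    fix R assume R: "R \<in> mrels m Alg"
    have "\<phi> (mconv m Alg R) = (\<Inter>i\<in>{..<m}. (\<Phi> i (R i))\<inverse>) \<inter> Rp\<inverse>"
      unfolding \<phi>_def mconv_def mlift_def using R Pc Rp_sym unfolding mrels_def
      by (intro arg_cong2[where f="(\<inter>)"] INF_cong) auto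
    also have "\<dots> = (\<phi> R)\<inverse>" unfolding \<phi>_def by auto
    finally show "\<phi> (mconv m Alg R) = (\<phi> R)\<inverse>" .
  qed
  have s6: "\<phi> (mzero m Alg) = {}"
  proof -
    have z: "\<Phi> 0 (mzero m Alg 0) = {}" using Pz[OF m0] m0 by (simp add: mzero_def mlift_def)
    have "\<phi> (mzero m Alg) \<subseteq> \<Phi> 0 (mzero m Alg 0)" unfolding \<phi>_def using m0 by blast
    thus ?thesis using z by blast
  qed
  have s7: "\<forall>R\<in>mrels m Alg. \<forall>R'\<in>mrels m Alg.
        (\<phi> R O \<phi> R') \<inter> \<phi> (muniv m Alg) \<subseteq> \<phi> (mcomp m Alg R R')"
  proof (intro ballI subsetI)
    fix R R' q assume R: "R \<in> mrels m Alg" and R': "R' \<in> mrels m Alg"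
      and q: "q \<in> (\<phi> R O \<phi> R') \<inter> \<phi> (muniv m Alg)"
    obtain x z where qq: "q = (x, z)" by (cases q)
    from q qq obtain y where xy: "(x,y) \<in> \<phi> R" and yz: "(y,z) \<in> \<phi> R'" and u: "(x,z) \<in> \<phi> (muniv m Alg)"
      by blast
    have "\<forall>i<m. (x,z) \<in> \<Phi> i (comp (Alg i) (R i) (R' i))"
    proof (intro allI impI)
      fix i assume i: "i < m"
      have a1: "(x,y) \<in> \<Phi> i (R i)" using xy i unfolding \<phi>_def by blast
      have a2: "(y,z) \<in> \<Phi> i (R' i)" using yz i unfolding \<phi>_def by blast
      have a3: "(x,z) \<in> \<Phi> i (muniv m Alg i)" using u i unfolding \<phi>_def by blast
      have "muniv m Alg i = univ (Alg i)" using i by (simp add: muniv_def mlift_def)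
      hence "(x,z) \<in> (\<Phi> i (R i) O \<Phi> i (R' i)) \<inter> \<Phi> i (univ (Alg i))" using a1 a2 a3 by auto
      moreover have "R i \<in> carrier (Alg i)" "R' i \<in> carrier (Alg i)" using R R' i unfolding mrels_def by auto
      ultimately show "(x,z) \<in> \<Phi> i (comp (Alg i) (R i) (R' i))" using Pcomp[OF i] by blast
    qed
    moreover have "(x,z) \<in> Rp" using u unfolding \<phi>_def by blast
    moreover have "\<forall>i<m. mcomp m Alg R R' i = comp (Alg i) (R i) (R' i)" by (simp add: mcomp_def mlift_def)
    ultimately show "q \<in> \<phi> (mcomp m Alg R R')" unfolding qq \<phi>_def by simp
  qed
  have s8: "\<forall>R\<in>mrels m Alg. \<forall>R'\<in>mrels m Alg. \<phi> (mmeet m Alg R R') = \<phi> R \<inter> \<phi> R'"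
  proof (intro ballI)
    fix R R' assume R: "R \<in> mrels m Alg" and R': "R' \<in> mrels m Alg"
    have "\<phi> (mmeet m Alg R R') = (\<Inter>i\<in>{..<m}. \<Phi> i (R i) \<inter> \<Phi> i (R' i)) \<inter> Rp"
      unfolding \<phi>_def mmeet_def mlift_def using R R' Pm unfolding mrels_def
      by (intro arg_cong2[where f="(\<inter>)"] INF_cong) auto
    also have "\<dots> = \<phi> R \<inter> \<phi> R'" unfolding \<phi>_def using m0 by auto
    finally show "\<phi> (mmeet m Alg R R') = \<phi> R \<inter> \<phi> R'" .
  qed
  have s9: "\<forall>R\<in>mrels m Alg. \<phi> R = (\<Union>B\<in>basics_in m Alg R. \<phi> B)"
  proof
    fix R assume R: "R \<in> mrels m Alg"
    have Rc: "\<And>i. i < m \<Longrightarrow> R i \<in> carrier (Alg i)" using R unfolding mrels_def by blast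
    show "\<phi> R = (\<Union>B\<in>basics_in m Alg R. \<phi> B)"
    proof
      show "\<phi> R \<subseteq> (\<Union>B\<in>basics_in m Alg R. \<phi> B)"
      proof
        fix p assume p: "p \<in> \<phi> R"
        have "\<forall>i<m. \<exists>b. is_atom (Alg i) b \<and> leq (Alg i) b (R i) \<and> p \<in> \<Phi> i b"
        proof (intro allI impI)
          fix i assume i: "i < m"
          have "p \<in> \<Phi> i (R i)" using p i unfolding \<phi>_def by blast
          thus "\<exists>b. is_atom (Alg i) b \<and> leq (Alg i) b (R i) \<and> p \<in> \<Phi> i b"
            using atom_cover[OF F[OF i] Rc[OF i]] by blast
        qed
        then obtain f where f: "\<And>i. i < m \<Longrightarrow> is_atom (Alg i) (f i) \<and> leq (Alg i) (f i) (R i) \<and> p \<in> \<Phi> i (f i)"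
          by metis
        define B where "B = mlift m f"
        have Bi: "\<And>i. i < m \<Longrightarrow> B i = f i" unfolding B_def mlift_def by simp
        have Bm: "B \<in> mrels m Alg" unfolding mrels_def
        proof (intro CollectI conjI allI impI)
          fix i assume i: "i < m" show "B i \<in> carrier (Alg i)" using f[OF i] Bi[OF i] unfolding is_atom_def by simp
        next
          fix i assume i: "m \<le> i" show "B i = undefined" using i unfolding B_def mlift_def by simp
        qed
        have "B \<in> basics_in m Alg R" unfolding basics_in_def mbasic_def mleq_def
          using Bm f Bi by simp
        moreover have "p \<in> \<phi> B"
        proof -
          have "\<forall>i\<in>{..<m}. p \<in> \<Phi> i (B i)" using f Bi by simp
          moreover have "p \<in> Rp" using p unfolding \<phi>_def by blast
          ultimately show ?thesis unfolding \<phi>_def by blast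
        qed
        ultimately show "p \<in> (\<Union>B\<in>basics_in m Alg R. \<phi> B)" by blast
      qed
    next
      show "(\<Union>B\<in>basics_in m Alg R. \<phi> B) \<subseteq> \<phi> R"
      proof (intro UN_least)
        fix B assume B: "B \<in> basics_in m Alg R"
        have "\<And>i. i < m \<Longrightarrow> \<Phi> i (B i) \<subseteq> \<Phi> i (R i)"
        proof -
          fix i assume i: "i < m"
          have "B i \<in> carrier (Alg i)" "leq (Alg i) (B i) (R i)"
            using B i unfolding basics_in_def mbasic_def mleq_def mrels_def by auto
          thus "\<Phi> i (B i) \<subseteq> \<Phi> i (R i)" using Pmono[OF i _ Rc[OF i]] by blast
        qed
        thus "\<phi> B \<subseteq> \<phi> R" unfolding \<phi>_def by blast
      qed
    qed
  qed
  show ?thesis unfolding sequential_formalism_def \<phi>_def[symmetric]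
    using s1 s2 s3 s4 s5 s6 s7 s8 s9 by (intro conjI) assumption+
qed

end
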